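(* Let $\varphi\in\mathcal{A}$ be w.h.i.s. Then the Casimirs of the Poisson algebra $(\mathcal{A}_\varphi,\{\cdot,\cdot\}_{\mathcal{A}_\varphi})$ are exactly the constants: $H^0(\mathcal{A}_\varphi)=\mathrm{Cas}(\mathcal{A}_\varphi)=\mathbf{F}$. Equivalently, if $f\in\mathcal{A}$ satisfies $\vec\nabla f\times\vec\nabla\varphi\in\varphi\mathcal{A}^3$, then $f\in\mathbf{F}+\varphi\mathcal{A}$.
   Context: $\mathbf{F}$ is a field of characteristic zero and $\mathcal{A}=\mathbf{F}[x,y,z]$. $\vec\nabla f=(\partial f/\partial x,\partial f/\partial y,\partial f/\partial z)$ and $\times$ is the cross product on $\mathcal{A}^3$. Fix positive integers $\varpi_1,\varpi_2,\varpi_3$ without common divisor $>1$ (weights of $x,y,z$). A nonzero polynomial is weight homogeneous of degree $d$ if it is an $\mathbf{F}$-linear combination of monomials $x^ay^bz^c$ with $a\varpi_1+b\varpi_2+c\varpi_3=d$. $\varphi\in\mathcal{A}$ is w.h.i.s. if it is weight homogeneous and $\mathcal{A}_{sing}:=\mathcal{A}/\langle\partial_x\varphi,\partial_y\varphi,\partial_z\varphi\rangle$ is a nonzero finite-dimensional $\mathbf{F}$-vector space. The Poisson bracket $\{\cdot,\cdot\}_\varphi$ on $\mathcal{A}$ is determined by $\{x,y\}_\varphi=\partial_z\varphi$, $\{y,z\}_\varphi=\partial_x\varphi$, $\{z,x\}_\varphi=\partial_y\varphi$; it induces a Poisson bracket $\{\cdot,\cdot\}_{\mathcal{A}_\varphi}$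 on $\mathcal{A}_\varphi:=\mathcal{A}/\langle\varphi\rangle$ via $\{\pi(f),\pi(g)\}_{\mathcal{A}_\varphi}=\pi(\{f,g\}_\varphi)$, $\pi:\mathcal{A}\to\mathcal{A}_\varphi$ the projection. A Casimir is an element $c$ with $\{c,\cdot\}_{\mathcal{A}_\varphi}=0$. *)

theory Defs
  imports "HOL-Computational_Algebra.Polynomial"
begin

text \<open>The polynomial ring F[x,y,z] is represented as ((F[x])[y])[z], i.e. the type
  'a poly poly poly: the outermost variable is z, the middle one y, the innermost x.\<close>

type_synonym 'a mpoly3 = "'a poly poly poly"

definition dx :: "'a::field mpoly3 \<Rightarrow> 'a mpoly3" where
  "dx p = map_poly (map_poly pderiv) p"

definition dy :: "'a::field mpoly3 \<Rightarrow> 'a mpoly3" where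
  "dy p = map_poly pderiv p"

definition dz :: "'a::field mpoly3 \<Rightarrow> 'a mpoly3" where
  "dz p = pderiv p"

definition mcoeff :: "'a::zero mpoly3 \<Rightarrow> nat \<Rightarrow> nat \<Rightarrow> nat \<Rightarrow> 'a" where
  "mcoeff p a b c = coeff (coeff (coeff p c) b) a"

definition const3 :: "'a::zero \<Rightarrow> 'a mpoly3" where
  "const3 c = [:[:[:c:]:]:]"

definition weight_homogeneous ::
  "nat \<Rightarrow> nat \<Rightarrow> nat \<Rightarrow> nat \<Rightarrow> 'a::zero mpoly3 \<Rightarrow> bool" where
  "weight_homogeneous w1 w2 w3 d p \<longleftrightarrow>
     p \<noteq> 0 \<and> (\<forall>a b c. mcoeff p a b c \<noteq> 0 \<longrightarrow> a * w1 + b * w2 + c * w3 = d)"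

definition jac_ideal :: "'a::field mpoly3 \<Rightarrow> 'a mpoly3 set" where
  "jac_ideal \<phi> = {a * dx \<phi> + b * dy \<phi> + c * dz \<phi> | a b c. True}"

text \<open>A/\<langle>\<partial>\<phi>\<rangle> is a nonzero finite-dimensional F-vector space: 1 is not in the ideal,
  and finitely many polynomials span the quotient over F.\<close>
definition jac_quotient_fin_nonzero :: "'a::field mpoly3 \<Rightarrow> bool" where
  "jac_quotient_fin_nonzero \<phi> \<longleftrightarrow>
     1 \<notin> jac_ideal \<phi> \<and>
     (\<exists>S. finite S \<and> (\<forall>f. \<exists>u. f - (\<Sum>s\<in>S. const3 (u s) * s) \<in> jac_ideal \<phi>))"

definition wh_is :: "nat \<Rightarrow> nat \<Rightarrow> nat \<Rightarrow> 'a::field mpoly3 \<Rightarrow> bool" where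
  "wh_is w1 w2 w3 \<phi> \<longleftrightarrow> (\<exists>d. weight_homogeneous w1 w2 w3 d \<phi>) \<and> jac_quotient_fin_nonzero \<phi>"

definition in_pideal :: "'a::field mpoly3 \<Rightarrow> 'a mpoly3 \<Rightarrow> bool" where
  "in_pideal \<phi> f \<longleftrightarrow> (\<exists>g. f = \<phi> * g)"

text \<open>Poisson bracket {f,g}_\<phi> = \<nabla>f \<cdot> (\<nabla>g \<times> \<nabla>\<phi>)\<close>
definition pbracket :: "'a::field mpoly3 \<Rightarrow> 'a mpoly3 \<Rightarrow> 'a mpoly3 \<Rightarrow> 'a mpoly3" where
  "pbracket \<phi> f g =
     dx f * (dy g * dz \<phi> - dz g * dy \<phi>)
   + dy f * (dz g * dx \<phi> - dx g * dz \<phi>)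
   + dz f * (dx g * dy \<phi> - dy g * dx \<phi>)"

text \<open>Casimir of A_\<phi> represented by f: {\<pi> f, \<pi> g} = 0 for all g\<close>
definition casimir_rep :: "'a::field mpoly3 \<Rightarrow> 'a mpoly3 \<Rightarrow> bool" where
  "casimir_rep \<phi> f \<longleftrightarrow> (\<forall>g. in_pideal \<phi> (pbracket \<phi> f g))"

end

theory Submission
  imports Defs
begin

lemma map_poly_add_gen:
  fixes D :: "'b::comm_ring_1 \<Rightarrow> 'b"
  assumes add: "\<And>a b. D (a+b) = D a + D b"
  shows "map_poly D (p + q) = map_poly D p + map_poly D q"
proof -
  have D0: "D 0 = 0" using add[of 0 0] by simp
  show ?thesis by (rule poly_eqI) (simp add: coeff_map_poly D0 add)
qed

lemma map_poly_diff_gen: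
  fixes D :: "'b::comm_ring_1 \<Rightarrow> 'b"
  assumes add: "\<And>a b. D (a+b) = D a + D b"
  shows "map_poly D (p - q) = map_poly D p - map_poly D q"
proof -
  have D0: "D 0 = 0" using add[of 0 0] by simp
  have Dm: "D (a - b) = D a - D b" for a b using add[of "a-b" b] by (simp add: algebra_simps)
  show ?thesis by (rule poly_eqI) (simp add: coeff_map_poly D0 Dm)
qed

lemma D_sum_gen:
  fixes D :: "'b::comm_ring_1 \<Rightarrow> 'b"
  assumes add: "\<And>a b. D (a+b) = D a + D b"
  shows "D (sum f A) = sum (\<lambda>i. D (f i)) A"
proof -
  have D0: "D 0 = 0" using add[of 0 0] by simp
  show ?thesis by (induction A rule: infinite_finite_induct) (simp_all add: D0 add)
qed

lemma map_poly_mult_gen: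
  fixes D :: "'b::comm_ring_1 \<Rightarrow> 'b"
  assumes add: "\<And>a b. D (a+b) = D a + D b" and mul: "\<And>a b. D (a*b) = D a * b + a * D b"
  shows "map_poly D (p * q) = map_poly D p * q + p * map_poly D q"
proof -
  have D0: "D 0 = 0" using add[of 0 0] by simp
  show ?thesis
    by (rule poly_eqI) (simp add: coeff_map_poly D0 coeff_mult D_sum_gen[OF add] mul sum.distrib)
qed

lemma mpd_add: "map_poly pderiv (p + q) = map_poly pderiv p + map_poly pderiv (q :: 'b::idom poly poly)"
  by (rule map_poly_add_gen) (simp add: pderiv_add)
lemma mpd_diff: "map_poly pderiv (p - q) = map_poly pderiv p - map_poly pderiv (q :: 'b::idom poly poly)"
  by (rule map_poly_diff_gen) (simp add: pderiv_add)
lemma mpd_mult: "map_poly pderiv (p * q) = map_poly pderiv p * q + p * map_poly pderiv (q :: 'b::idom poly poly)"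
  by (rule map_poly_mult_gen) (simp_all add: pderiv_add pderiv_mult)

lemma dy_add: "dy (p + q) = dy p + dy q" unfolding dy_def by (rule mpd_add)
lemma dy_diff: "dy (p - q) = dy p - dy q" unfolding dy_def by (rule mpd_diff)
lemma dy_mult: "dy (p * q) = dy p * q + p * dy q" unfolding dy_def by (rule mpd_mult)

lemma dx_add: "dx (p + q) = dx p + dx q"
  unfolding dx_def by (rule map_poly_add_gen) (rule mpd_add)
lemma dx_diff: "dx (p - q) = dx p - dx q"
  unfolding dx_def by (rule map_poly_diff_gen) (rule mpd_add)
lemma dx_mult: "dx (p * q) = dx p * q + p * dx q"
  unfolding dx_def by (rule map_poly_mult_gen) (rule mpd_add, rule mpd_mult)

lemma dz_add: "dz (p + q) = dz p + dz q" unfolding dz_def by (rule pderiv_add)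
lemma dz_diff: "dz (p - q) = dz p - dz q" unfolding dz_def by (rule pderiv_diff)
lemma dz_mult: "dz (p * q) = dz p * q + p * dz q" unfolding dz_def by (simp add: pderiv_mult algebra_simps)

lemma d_const3: "dx (const3 c) = 0" "dy (const3 c) = 0" "dz (const3 c) = 0"
  by (simp_all add: dx_def dy_def dz_def const3_def map_poly_pCons)

lemma mcoeff_ext: "(\<And>a b c. mcoeff p a b c = mcoeff q a b c) \<Longrightarrow> p = q"
  unfolding mcoeff_def by (intro poly_eqI) blast

lemma mcoeff_add: "mcoeff (p + q) a b c = mcoeff p a b c + mcoeff q a b c"
  by (simp add: mcoeff_def)
lemma mcoeff_diff: "mcoeff (p - q) a b c = mcoeff p a b c - mcoeff q a b c"
  by (simp add: mcoeff_def)
lemma mcoeff_0: "mcoeff 0 a b c = 0" by (simp add: mcoeff_def)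
lemma mcoeff_const3_mult: "mcoeff (const3 k * p) a b c = k * mcoeff p a b c"
  by (simp add: mcoeff_def const3_def)
lemma mcoeff_const3: "mcoeff (const3 k) a b c = (if a = 0 \<and> b = 0 \<and> c = 0 then k else 0)"
  by (simp add: mcoeff_def const3_def coeff_pCons split: nat.split)

lemma mcoeff_dx: "mcoeff (dx p) a b c = of_nat (Suc a) * mcoeff p (Suc a) b c"
  by (simp add: mcoeff_def dx_def coeff_map_poly coeff_pderiv)
lemma coeff_of_nat_mult_poly: "coeff (of_nat n * r) a = of_nat n * coeff r a"
  by (simp add: of_nat_poly)
lemma mcoeff_dy: "mcoeff (dy p) a b c = of_nat (Suc b) * mcoeff p a (Suc b) c"
  by (simp add: mcoeff_def dy_def coeff_map_poly coeff_pderiv coeff_of_nat_mult_poly del: of_nat_Suc)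
lemma coeff_of_nat_mult_poly2: "coeff (coeff (of_nat n * r) a) b = of_nat n * coeff (coeff r a) b"
  by (simp add: of_nat_poly)
lemma mcoeff_dz: "mcoeff (dz p) a b c = of_nat (Suc c) * mcoeff p a b (Suc c)"
  by (simp add: mcoeff_def dz_def coeff_pderiv coeff_of_nat_mult_poly2 del: of_nat_Suc)

definition x3 :: "'a::field mpoly3" where "x3 = [:[:[:0,1:]:]:]"
definition y3 :: "'a::field mpoly3" where "y3 = [:[:0,1:]:]"
definition z3 :: "'a::field mpoly3" where "z3 = [:0,1:]"

lemma mcoeff_x3: "mcoeff (x3 * p) a b c = (if a = 0 then 0 else mcoeff p (a-1) b c)"
  by (simp add: mcoeff_def x3_def coeff_pCons split: nat.split)
lemma mcoeff_y3: "mcoeff (y3 * p) a b c = (if b = 0 then 0 else mcoeff p a (b-1) c)"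
  by (simp add: mcoeff_def y3_def coeff_pCons split: nat.split)
lemma mcoeff_z3: "mcoeff (z3 * p) a b c = (if c = 0 then 0 else mcoeff p a b (c-1))"
  by (simp add: mcoeff_def z3_def coeff_pCons split: nat.split)

lemma d_x3: "dx x3 = 1" "dy x3 = 0" "dz x3 = 0"
  by (simp_all add: x3_def dx_def dy_def dz_def pderiv_pCons one_pCons map_poly_pCons)
lemma d_y3: "dx y3 = 0" "dy y3 = 1" "dz y3 = 0"
  by (simp_all add: y3_def dx_def dy_def dz_def pderiv_pCons one_pCons map_poly_pCons)
lemma d_z3: "dx z3 = 0" "dy z3 = 0" "dz z3 = 1"
  by (simp_all add: z3_def dx_def dy_def dz_def pderiv_pCons one_pCons map_poly_pCons)

definition Eop :: "nat \<Rightarrow> nat \<Rightarrow> nat \<Rightarrow> 'a::field mpoly3 \<Rightarrow> 'a mpoly3" where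
  "Eop w1 w2 w3 p = const3 (of_nat w1) * (x3 * dx p) + const3 (of_nat w2) * (y3 * dy p)
     + const3 (of_nat w3) * (z3 * dz p)"

lemma mcoeff_Eop:
  "mcoeff (Eop w1 w2 w3 p) a b c = of_nat (a*w1 + b*w2 + c*w3) * mcoeff p a b c"
proof -
  have 1: "mcoeff (x3 * dx p) a b c = of_nat a * mcoeff p a b c"
    by (cases a) (simp_all add: mcoeff_x3 mcoeff_dx)
  have 2: "mcoeff (y3 * dy p) a b c = of_nat b * mcoeff p a b c"
    by (cases b) (simp_all add: mcoeff_y3 mcoeff_dy)
  have 3: "mcoeff (z3 * dz p) a b c = of_nat c * mcoeff p a b c"
    by (cases c) (simp_all add: mcoeff_z3 mcoeff_dz)
  show ?thesis unfolding Eop_def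
    by (simp only: mcoeff_add mcoeff_const3_mult 1 2 3) (simp add: algebra_simps)
qed

lemma Eop_diff: "Eop w1 w2 w3 (p - q) = Eop w1 w2 w3 p - Eop w1 w2 w3 q"
  unfolding Eop_def by (simp add: dx_diff dy_diff dz_diff algebra_simps)

lemma Eop_mult: "Eop w1 w2 w3 (p * q) = Eop w1 w2 w3 p * q + p * Eop w1 w2 w3 q"
  unfolding Eop_def by (simp add: dx_mult dy_mult dz_mult algebra_simps)

lemma Eop_euler:
  assumes "weight_homogeneous w1 w2 w3 d \<phi>"
  shows "Eop w1 w2 w3 \<phi> = const3 (of_nat d) * \<phi>"
proof (rule mcoeff_ext)
  fix a b c
  show "mcoeff (Eop w1 w2 w3 \<phi>) a b c = mcoeff (const3 (of_nat d) * \<phi>) a b c"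
    using assms unfolding weight_homogeneous_def
    by (cases "mcoeff \<phi> a b c = 0") (auto simp only: mcoeff_Eop mcoeff_const3_mult mult_zero_right)
qed

lemma Eop_zero_const:
  fixes p :: "'a::field_char_0 mpoly3"
  assumes "w1 > 0" "w2 > 0" "w3 > 0" "Eop w1 w2 w3 p = 0"
  shows "p = const3 (mcoeff p 0 0 0)"
proof (rule mcoeff_ext)
  fix a b c
  define n where "n = a*w1 + b*w2 + c*w3"
  have "of_nat n * mcoeff p a b c = (0::'a)"
    using assms(4) mcoeff_Eop[of w1 w2 w3 p a b c] by (simp only: n_def mcoeff_0)
  then have "n = 0 \<or> mcoeff p a b c = 0" by (metis mult_eq_0_iff of_nat_eq_0_iff)
  then have "a*w1 + b*w2 + c*w3 = 0 \<or> mcoeff p a b c = 0" by (simp add: n_def)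
  then show "mcoeff p a b c = mcoeff (const3 (mcoeff p 0 0 0)) a b c"
    using assms(1-3) by (auto simp: mcoeff_const3)
qed

lemma jac_0: "0 \<in> jac_ideal \<phi>"
  unfolding jac_ideal_def by (rule CollectI, rule exI[of _ 0], rule exI[of _ 0], rule exI[of _ 0]) simp
lemma jac_add: "u \<in> jac_ideal \<phi> \<Longrightarrow> v \<in> jac_ideal \<phi> \<Longrightarrow> u + v \<in> jac_ideal \<phi>"
  unfolding jac_ideal_def
proof clarify
  fix a b c a' b' c'
  show "\<exists>a'' b'' c''. a * dx \<phi> + b * dy \<phi> + c * dz \<phi> + (a' * dx \<phi> + b' * dy \<phi> + c' * dz \<phi>)
     = a'' * dx \<phi> + b'' * dy \<phi> + c'' * dz \<phi> \<and> True"
    by (rule exI[of _ "a+a'"], rule exI[of _ "b+b'"], rule exI[of _ "c+c'"]) (simp add: algebra_simps)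
qed
lemma jac_mult: "u \<in> jac_ideal \<phi> \<Longrightarrow> r * u \<in> jac_ideal \<phi>"
  unfolding jac_ideal_def
proof clarify
  fix a b c
  show "\<exists>a'' b'' c''. r * (a * dx \<phi> + b * dy \<phi> + c * dz \<phi>)
     = a'' * dx \<phi> + b'' * dy \<phi> + c'' * dz \<phi> \<and> True"
    by (rule exI[of _ "r*a"], rule exI[of _ "r*b"], rule exI[of _ "r*c"]) (simp add: algebra_simps)
qed
lemma jac_sum: "(\<And>i. i \<in> A \<Longrightarrow> f i \<in> jac_ideal \<phi>) \<Longrightarrow> sum f A \<in> jac_ideal \<phi>"
  by (induction A rule: infinite_finite_induct) (simp_all add: jac_0 jac_add)

lemma const3_add: "const3 (a + b) = const3 a + const3 b" by (simp add: const3_def)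
lemma const3_mult: "const3 (a * b) = const3 a * const3 (b::'a::field)" by (simp add: const3_def)
lemma const3_zero: "const3 0 = 0" by (simp add: const3_def)
lemma const3_sum: "const3 (sum f A) = (\<Sum>i\<in>A. const3 (f i))"
  by (induction A rule: infinite_finite_induct) (simp_all add: const3_zero const3_add)

lemma lin_dep:
  fixes v :: "'i \<Rightarrow> 's \<Rightarrow> 'a::field"
  assumes "finite S" "finite I" "card I > card S"
  shows "\<exists>l. (\<exists>i\<in>I. l i \<noteq> 0) \<and> (\<forall>t\<in>S. (\<Sum>i\<in>I. l i * v i t) = 0)"
  using assms
proof (induction S arbitrary: I v rule: finite_induct)
  case empty
  then obtain i where "i \<in> I" by fastforce
  then show ?case by (intro exI[of _ "\<lambda>_. 1"]) auto
next
  case (insert s S)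
  show ?case
  proof (cases "\<forall>i\<in>I. v i s = 0")
    case True
    have "card I > card S" using insert by simp
    then obtain l where l: "\<exists>i\<in>I. l i \<noteq> 0" "\<forall>t\<in>S. (\<Sum>i\<in>I. l i * v i t) = 0"
      using insert.IH[of I v] insert.prems by blast
    show ?thesis using l True by (intro exI[of _ l]) auto
  next
    case False
    then obtain j where j: "j \<in> I" "v j s \<noteq> 0" by blast
    define I' where "I' = I - {j}"
    have finI': "finite I'" using insert by (simp add: I'_def)
    have cI': "card I' > card S" using insert j by (simp add: I'_def)
    define w where "w i t = v i t - (v i s / v j s) * v j t" for i t
    obtain m where m: "\<exists>i\<in>I'. m i \<noteq> 0" "\<forall>t\<in>S. (\<Sum>i\<in>I'. m i * w i t) = 0"
      using insert.IH[OF finI' cI', of w] by blast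
    define lj where "lj = - (\<Sum>i\<in>I'. m i * v i s) / v j s"
    define l where "l i = (if i = j then lj else m i)" for i
    have key: "(\<Sum>i\<in>I. l i * v i t) = 0" if t: "t \<in> insert s S" for t
    proof -
      have wz: "(\<Sum>i\<in>I'. m i * w i t) = 0"
      proof (cases "t = s")
        case True
        then show ?thesis using j by (simp add: w_def)
      next
        case False
        then show ?thesis using m t by auto
      qed
      have "(\<Sum>i\<in>I. l i * v i t) = l j * v j t + (\<Sum>i\<in>I'. l i * v i t)"
        using insert.prems j by (simp add: I'_def sum.remove)
      also have "(\<Sum>i\<in>I'. l i * v i t) = (\<Sum>i\<in>I'. m i * v i t)"
        by (rule sum.cong) (auto simp: l_def I'_def)
      also have "(\<Sum>i\<in>I'. m i * v i t) = (\<Sum>i\<in>I'. m i * w i t) + (\<Sum>i\<in>I'. m i * v i s) / v j s * v j t"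
        by (simp add: w_def algebra_simps sum_distrib_left sum_distrib_right sum_subtractf sum_divide_distrib)
      finally show ?thesis using wz j by (simp add: l_def lj_def)
    qed
    have nz: "\<exists>i\<in>I. l i \<noteq> 0" using m by (auto simp: l_def I'_def)
    show ?thesis using nz key by blast
  qed
qed

lemma dep_in_J:
  fixes \<phi> :: "'a::field mpoly3" and m :: "nat \<Rightarrow> 'a mpoly3"
  assumes "jac_quotient_fin_nonzero \<phi>"
  shows "\<exists>l n. (\<exists>k\<le>n. l k \<noteq> 0) \<and> (\<Sum>k\<le>n. const3 (l k) * m k) \<in> jac_ideal \<phi>"
proof -
  obtain S where S: "finite S" "\<forall>f. \<exists>u. f - (\<Sum>s\<in>S. const3 (u s) * s) \<in> jac_ideal \<phi>"
    using assms unfolding jac_quotient_fin_nonzero_def by blast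
  have "\<exists>u. \<forall>f. f - (\<Sum>s\<in>S. const3 (u f s) * s) \<in> jac_ideal \<phi>"
    using S(2) by (rule choice)
  then obtain u where u: "\<forall>f. f - (\<Sum>s\<in>S. const3 (u f s) * s) \<in> jac_ideal \<phi>" by blast
  define U where "U k = u (m k)" for k
  have U: "\<And>k. m k - (\<Sum>s\<in>S. const3 (U k s) * s) \<in> jac_ideal \<phi>"
    using u by (simp add: U_def)
  define n where "n = card S"
  obtain l where l: "\<exists>i\<in>{..n}. l i \<noteq> 0" "\<forall>t\<in>S. (\<Sum>i\<in>{..n}. l i * U i t) = 0"
    using lin_dep[OF S(1), of "{..n}" U] by (auto simp: n_def)
  have inJ: "(\<Sum>k\<le>n. const3 (l k) * (m k - (\<Sum>s\<in>S. const3 (U k s) * s))) \<in> jac_ideal \<phi>"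
    by (rule jac_sum) (rule jac_mult[OF U])
  have "(\<Sum>k\<le>n. const3 (l k) * (m k - (\<Sum>s\<in>S. const3 (U k s) * s)))
      = (\<Sum>k\<le>n. const3 (l k) * m k) - (\<Sum>k\<le>n. \<Sum>s\<in>S. const3 (l k * U k s) * s)"
  proof -
    have "const3 (l k) * (m k - (\<Sum>s\<in>S. const3 (U k s) * s))
       = const3 (l k) * m k - (\<Sum>s\<in>S. const3 (l k * U k s) * s)" for k
      by (simp only: right_diff_distrib sum_distrib_left const3_mult mult.assoc)
    then show ?thesis by (simp only: sum_subtractf)
  qed
  also have "(\<Sum>k\<le>n. \<Sum>s\<in>S. const3 (l k * U k s) * s) = (\<Sum>s\<in>S. \<Sum>k\<le>n. const3 (l k * U k s) * s)"
    by (rule sum.swap)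
  also have "\<dots> = (\<Sum>s\<in>S. const3 (\<Sum>k\<le>n. l k * U k s) * s)"
    by (simp add: const3_sum sum_distrib_right)
  also have "\<dots> = 0" using l(2) by (simp add: const3_zero)
  finally have "(\<Sum>k\<le>n. const3 (l k) * m k) \<in> jac_ideal \<phi>" using inJ by simp
  then show ?thesis using l(1) by auto
qed

lemma poly_mod_sum: "(sum f A) mod (p::'a::field poly) = (\<Sum>i\<in>A. f i mod p)"
  by (induction A rule: infinite_finite_induct) (simp_all add: poly_mod_add_left)

lemma coeff2_const_mult: "coeff (coeff ([:[:p:]:] * X) c) b = p * coeff (coeff X c) b"
  by simp

lemma cancel_x:
  fixes p :: "'a::field poly" and q :: "'a poly poly" and A :: "'a mpoly3"
  assumes "q \<noteq> 0" "\<And>i. coeff q i = [:coeff (coeff q i) 0:]" "[:[:p:]:] dvd A * [:q:]"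
  shows "[:[:p:]:] dvd A"
proof -
  define M where "M B = map_poly (map_poly (\<lambda>r. r mod p)) B" for B :: "'a mpoly3"
  define Dv where "Dv B = map_poly (map_poly (\<lambda>r. r div p)) B" for B :: "'a mpoly3"
  have mc: "coeff (coeff (M B) c) b = coeff (coeff B c) b mod p" for B c b
    by (simp add: M_def coeff_map_poly)
  have dc: "coeff (coeff (Dv B) c) b = coeff (coeff B c) b div p" for B c b
    by (simp add: Dv_def coeff_map_poly)
  have decomp: "A = [:[:p:]:] * Dv A + M A"
    by (intro poly_eqI) (simp add: mc dc)
  have Mmul: "M ([:[:p:]:] * K) = 0" for K
    by (intro poly_eqI) (simp add: mc)
  define mu where "mu i = coeff (coeff q i) 0" for i
  have MQ: "M (B * [:q:]) = M B * [:q:]" for B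
  proof (rule poly_eqI, rule poly_eqI)
    fix c b
    have e1: "coeff (B * [:q:]) c = coeff B c * q" for B :: "'a mpoly3"
      by (simp add: mult.commute)
    have t: "x * coeff q j = smult (mu j) x" for x j
    proof -
      have "coeff q j = [:mu j:]" using assms(2) by (simp add: mu_def)
      then show ?thesis by (simp add: mult.commute)
    qed
    have e2: "coeff (r * q) b = (\<Sum>i\<le>b. smult (mu (b - i)) (coeff r i))" for r
      by (simp add: coeff_mult t)
    show "coeff (coeff (M (B * [:q:])) c) b = coeff (coeff (M B * [:q:]) c) b"
      by (simp only: mc e1 e2 poly_mod_sum mod_smult_left)
  qed
  obtain K where K: "A * [:q:] = [:[:p:]:] * K" using assms(3) by blast
  have "M A * [:q:] = 0" using MQ[of A] K Mmul by simp
  then have "M A = 0" using assms(1) by simp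
  then show ?thesis using decomp by (metis add.right_neutral dvdI)
qed

lemma coeff_sum_monom_le:
  "coeff (\<Sum>k\<le>n. monom (H k) k) m = (if m \<le> n then H m else 0)"
  by (simp add: coeff_sum coeff_monom)

lemma P_shape: "(\<Sum>k\<le>n. const3 (l k) * [:[:monom 1 k:]:]) = [:[:\<Sum>k\<le>n. monom (l k :: 'a::field) k:]:]"
  by (induction n) (simp_all add: const3_def smult_monom monom_0)
lemma Q_shape: "(\<Sum>k\<le>n. const3 (l k) * [:monom 1 k:]) = [:\<Sum>k\<le>n. monom [:l k :: 'a::field:] k:]"
  by (induction n) (simp_all add: const3_def smult_monom monom_0)

definition inv_build :: "nat \<Rightarrow> nat \<Rightarrow> nat \<Rightarrow> nat \<Rightarrow> 'a::field_char_0 mpoly3 \<Rightarrow> 'a mpoly3" where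
  "inv_build w1 w2 w3 d g = (\<Sum>c\<le>degree g. monom (\<Sum>b\<le>degree (coeff g c). monom
     (\<Sum>a\<le>degree (coeff (coeff g c) b). monom (mcoeff g a b c / of_nat (d + a*w1+b*w2+c*w3)) a) b) c)"

lemma mcoeff_inv_build:
  "mcoeff (inv_build w1 w2 w3 d g) a b c = mcoeff g a b c / of_nat (d + a*w1+b*w2+c*w3)"
proof -
  have z1: "mcoeff g a b c = 0" if "\<not> c \<le> degree g"
    using that by (simp add: mcoeff_def coeff_eq_0)
  have z2: "mcoeff g a b c = 0" if "\<not> b \<le> degree (coeff g c)"
    using that by (simp add: mcoeff_def coeff_eq_0)
  have z3: "mcoeff g a b c = 0" if "\<not> a \<le> degree (coeff (coeff g c) b)"
    using that by (simp add: mcoeff_def coeff_eq_0)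
  have e: "mcoeff (inv_build w1 w2 w3 d g) a b c = coeff (coeff (coeff (inv_build w1 w2 w3 d g) c) b) a"
    by (simp add: mcoeff_def)
  show ?thesis
    unfolding e unfolding inv_build_def coeff_sum_monom_le
    using z1 z2 z3 by (simp add: coeff_sum_monom_le del: of_nat_add)
qed

lemma inv_build_eq:
  fixes g :: "'a::field_char_0 mpoly3"
  assumes "d > 0"
  shows "const3 (of_nat d) * inv_build w1 w2 w3 d g + Eop w1 w2 w3 (inv_build w1 w2 w3 d g) = g"
proof (rule mcoeff_ext)
  fix a b c
  have nz: "(of_nat (d + a*w1+b*w2+c*w3) :: 'a) \<noteq> 0" using assms by (simp only: of_nat_eq_0_iff)
  have "mcoeff (const3 (of_nat d) * inv_build w1 w2 w3 d g + Eop w1 w2 w3 (inv_build w1 w2 w3 d g)) a b c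
     = (of_nat d + of_nat (a*w1 + b*w2 + c*w3)) * (mcoeff g a b c / of_nat (d + a*w1+b*w2+c*w3))"
    by (simp only: mcoeff_add mcoeff_const3_mult mcoeff_Eop mcoeff_inv_build distrib_right)
  also have "of_nat d + of_nat (a*w1 + b*w2 + c*w3) = (of_nat (d + a*w1+b*w2+c*w3) :: 'a)"
    by (simp add: add.assoc)
  finally show "mcoeff (const3 (of_nat d) * inv_build w1 w2 w3 d g + Eop w1 w2 w3 (inv_build w1 w2 w3 d g)) a b c
     = mcoeff g a b c" using nz by simp
qed

lemma main_part:
  fixes \<phi> f :: "'a::field_char_0 mpoly3"
  assumes w: "w1 > 0" "w2 > 0" "w3 > 0"
    and wh: "wh_is w1 w2 w3 \<phi>"
    and c1: "in_pideal \<phi> (dy f * dz \<phi> - dz f * dy \<phi>)"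
    and c2: "in_pideal \<phi> (dz f * dx \<phi> - dx f * dz \<phi>)"
    and c3: "in_pideal \<phi> (dx f * dy \<phi> - dy f * dx \<phi>)"
  shows "\<exists>c. in_pideal \<phi> (f - const3 c)"
proof -
  obtain d where hom: "weight_homogeneous w1 w2 w3 d \<phi>" and fin: "jac_quotient_fin_nonzero \<phi>"
    using wh unfolding wh_is_def by blast
  have phi0: "\<phi> \<noteq> 0" using hom unfolding weight_homogeneous_def by blast
  have euler: "Eop w1 w2 w3 \<phi> = const3 (of_nat d) * \<phi>" by (rule Eop_euler[OF hom])
  \<comment> \<open>elements of the Jacobian ideal in x alone and in y alone\<close>
  obtain l n where l: "\<exists>k\<le>n. l k \<noteq> 0"
    and lJ: "(\<Sum>k\<le>n. const3 (l k) * [:[:monom 1 k:]:]) \<in> jac_ideal \<phi>"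
    using dep_in_J[OF fin, of "\<lambda>k. [:[:monom 1 k:]:]"] by blast
  obtain l' n' where l': "\<exists>k\<le>n'. l' k \<noteq> 0"
    and lJ': "(\<Sum>k\<le>n'. const3 (l' k) * [:monom 1 k:]) \<in> jac_ideal \<phi>"
    using dep_in_J[OF fin, of "\<lambda>k. [:monom 1 k:]"] by blast
  define pp where "pp = (\<Sum>k\<le>n. monom (l k) k)"
  define qq where "qq = (\<Sum>k\<le>n'. monom [:l' k:] k)"
  define P where "P = [:[:pp:]:]"
  define Q where "Q = [:qq:]"
  have PJ: "P \<in> jac_ideal \<phi>" using lJ unfolding P_shape by (simp only: P_def pp_def)
  have QJ: "Q \<in> jac_ideal \<phi>" using lJ' unfolding Q_shape by (simp only: Q_def qq_def)
  have pp0: "pp \<noteq> 0"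
  proof
    assume "pp = 0"
    then have "coeff pp k = 0" for k by simp
    moreover obtain k where "k \<le> n" "l k \<noteq> 0" using l by blast
    moreover have "coeff pp k = l k" using \<open>k \<le> n\<close> by (simp add: pp_def coeff_sum_monom_le)
    ultimately show False by simp
  qed
  have qq0: "qq \<noteq> 0"
  proof
    assume "qq = 0"
    then have "coeff qq k = 0" for k by simp
    moreover obtain k where "k \<le> n'" "l' k \<noteq> 0" using l' by blast
    moreover have "coeff qq k = [:l' k:]" using \<open>k \<le> n'\<close> by (simp add: qq_def coeff_sum_monom_le)
    ultimately show False by simp
  qed
  have P0: "P \<noteq> 0" using pp0 by (simp add: P_def)
  have Q0: "Q \<noteq> 0" using qq0 by (simp add: Q_def)
  have qqc: "coeff qq i = [:coeff (coeff qq i) 0:]" for i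
    by (simp add: qq_def coeff_sum_monom_le)
  have dpos: "d > 0"
  proof (rule ccontr)
    assume "\<not> d > 0"
    then have "d = 0" by simp
    then have "Eop w1 w2 w3 \<phi> = 0" using euler by (simp add: const3_zero)
    then have pc: "\<phi> = const3 (mcoeff \<phi> 0 0 0)" using Eop_zero_const[OF w] by blast
    have "dx \<phi> = 0" "dy \<phi> = 0" "dz \<phi> = 0" by (subst pc, simp add: d_const3)+
    then have "jac_ideal \<phi> = {0}" unfolding jac_ideal_def by auto
    then show False using PJ P0 by simp
  qed
  obtain g1 where g1: "dy f * dz \<phi> - dz f * dy \<phi> = \<phi> * g1" using c1 unfolding in_pideal_def by blast
  obtain g2 where g2: "dz f * dx \<phi> - dx f * dz \<phi> = \<phi> * g2" using c2 unfolding in_pideal_def by blast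
  obtain g3 where g3: "dx f * dy \<phi> - dy f * dx \<phi> = \<phi> * g3" using c3 unfolding in_pideal_def by blast
  define u1 where "u1 = const3 (of_nat w1) * (x3 :: 'a mpoly3)"
  define u2 where "u2 = const3 (of_nat w2) * (y3 :: 'a mpoly3)"
  define u3 where "u3 = const3 (of_nat w3) * (z3 :: 'a mpoly3)"
  define D where "D = (const3 (of_nat d) :: 'a mpoly3)"
  define Ef where "Ef = Eop w1 w2 w3 f"
  have Efe: "Ef = u1 * dx f + u2 * dy f + u3 * dz f"
    by (simp add: Ef_def Eop_def u1_def u2_def u3_def mult.assoc)
  have eul: "u1 * dx \<phi> + u2 * dy \<phi> + u3 * dz \<phi> = D * \<phi>"
    using euler by (simp add: Eop_def u1_def u2_def u3_def D_def mult.assoc)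
  have hx: "Ef * dx \<phi> = \<phi> * (D * dx f - (u2 * g3 - u3 * g2))"
  proof -
    have "\<phi> * (D * dx f - (u2 * g3 - u3 * g2)) = (D * \<phi>) * dx f - u2 * (\<phi> * g3) + u3 * (\<phi> * g2)"
      by (simp add: algebra_simps)
    also have "\<dots> = (u1 * dx \<phi> + u2 * dy \<phi> + u3 * dz \<phi>) * dx f
        - u2 * (dx f * dy \<phi> - dy f * dx \<phi>) + u3 * (dz f * dx \<phi> - dx f * dz \<phi>)"
      by (simp only: eul g2 g3)
    also have "\<dots> = Ef * dx \<phi>" unfolding Efe by (simp add: algebra_simps)
    finally show ?thesis by simp
  qed
  have hy: "Ef * dy \<phi> = \<phi> * (D * dy f - (u3 * g1 - u1 * g3))"
  proof -
    have "\<phi> * (D * dy f - (u3 * g1 - u1 * g3)) = (D * \<phi>) * dy f - u3 * (\<phi> * g1) + u1 * (\<phi> * g3)"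
      by (simp add: algebra_simps)
    also have "\<dots> = (u1 * dx \<phi> + u2 * dy \<phi> + u3 * dz \<phi>) * dy f
        - u3 * (dy f * dz \<phi> - dz f * dy \<phi>) + u1 * (dx f * dy \<phi> - dy f * dx \<phi>)"
      by (simp only: eul g1 g3)
    also have "\<dots> = Ef * dy \<phi>" unfolding Efe by (simp add: algebra_simps)
    finally show ?thesis by simp
  qed
  have hz: "Ef * dz \<phi> = \<phi> * (D * dz f - (u1 * g2 - u2 * g1))"
  proof -
    have "\<phi> * (D * dz f - (u1 * g2 - u2 * g1)) = (D * \<phi>) * dz f - u1 * (\<phi> * g2) + u2 * (\<phi> * g1)"
      by (simp add: algebra_simps)
    also have "\<dots> = (u1 * dx \<phi> + u2 * dy \<phi> + u3 * dz \<phi>) * dz f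
        - u1 * (dz f * dx \<phi> - dx f * dz \<phi>) + u2 * (dy f * dz \<phi> - dz f * dy \<phi>)"
      by (simp only: eul g1 g2)
    also have "\<dots> = Ef * dz \<phi>" unfolding Efe by (simp add: algebra_simps)
    finally show ?thesis by simp
  qed
  have dvdJ: "\<phi> dvd Ef * j" if jJ: "j \<in> jac_ideal \<phi>" for j
  proof -
    obtain a b c where j: "j = a * dx \<phi> + b * dy \<phi> + c * dz \<phi>"
      using jJ unfolding jac_ideal_def by blast
    have "Ef * j = a * (Ef * dx \<phi>) + b * (Ef * dy \<phi>) + c * (Ef * dz \<phi>)"
      by (simp add: j algebra_simps)
    then show ?thesis by (simp add: hx hy hz)
  qed
  obtain AP where AP: "Ef * P = \<phi> * AP" using dvdJ[OF PJ] by blast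
  obtain AQ where AQ: "Ef * Q = \<phi> * AQ" using dvdJ[OF QJ] by blast
  have "\<phi> * (AP * Q) = (Ef * P) * Q" by (simp only: AP mult.assoc)
  also have "\<dots> = (Ef * Q) * P" by (simp only: mult.assoc mult.commute[of P Q])
  also have "\<dots> = \<phi> * (AQ * P)" by (simp only: AQ mult.assoc)
  finally have "\<phi> * (AP * Q) = \<phi> * (AQ * P)" .
  then have "AP * Q = AQ * P" using phi0 by simp
  then have "P dvd AP * [:qq:]" by (simp add: Q_def)
  then have "[:[:pp:]:] dvd AP" using cancel_x[OF qq0 qqc] by (simp add: P_def)
  then obtain C where C: "AP = P * C" by (auto simp: P_def)
  have "Ef * P = (\<phi> * C) * P" using AP C by (simp add: algebra_simps)
  then have EfC: "Ef = \<phi> * C" using P0 by simp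
  define h where "h = inv_build w1 w2 w3 d C"
  have hC: "D * h + Eop w1 w2 w3 h = C" unfolding h_def D_def by (rule inv_build_eq[OF dpos])
  have "Eop w1 w2 w3 (f - \<phi> * h) = Ef - (Eop w1 w2 w3 \<phi> * h + \<phi> * Eop w1 w2 w3 h)"
    by (simp add: Eop_diff Eop_mult Ef_def)
  also have "\<dots> = \<phi> * (C - (D * h + Eop w1 w2 w3 h))"
    by (simp add: EfC euler D_def algebra_simps)
  also have "\<dots> = 0" by (simp add: hC)
  finally have eqk0: "f - \<phi> * h = const3 (mcoeff (f - \<phi> * h) 0 0 0)"
    using Eop_zero_const[OF w] by blast
  define k where "k = mcoeff (f - \<phi> * h) 0 0 0"
  have eqk: "f - \<phi> * h = const3 k" using eqk0 unfolding k_def .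
  have "f - const3 k = f - (f - \<phi> * h)" by (simp only: eqk)
  also have "\<dots> = \<phi> * h" by simp
  finally have "f - const3 k = \<phi> * h" .
  then show ?thesis unfolding in_pideal_def by blast
qed

lemma neg_pideal: "in_pideal \<phi> (- g) \<Longrightarrow> in_pideal \<phi> g"
  unfolding in_pideal_def by (metis minus_equation_iff mult_minus_right)

theorem mainTheorem9:
  fixes \<phi> :: "'a::field_char_0 mpoly3"
    and w1 w2 w3 :: nat
  assumes "w1 > 0" and "w2 > 0" and "w3 > 0"
    and "gcd w1 (gcd w2 w3) = 1"
    and "wh_is w1 w2 w3 \<phi>"
  shows "(\<forall>f. casimir_rep \<phi> f \<longleftrightarrow> (\<exists>c. in_pideal \<phi> (f - const3 c)))
       \<and> (\<forall>f. in_pideal \<phi> (dy f * dz \<phi> - dz f * dy \<phi>)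
              \<and> in_pideal \<phi> (dz f * dx \<phi> - dx f * dz \<phi>)
              \<and> in_pideal \<phi> (dx f * dy \<phi> - dy f * dx \<phi>)
              \<longrightarrow> (\<exists>c. in_pideal \<phi> (f - const3 c)))"
proof -
  have B: "\<forall>f. in_pideal \<phi> (dy f * dz \<phi> - dz f * dy \<phi>)
              \<and> in_pideal \<phi> (dz f * dx \<phi> - dx f * dz \<phi>)
              \<and> in_pideal \<phi> (dx f * dy \<phi> - dy f * dx \<phi>)
              \<longrightarrow> (\<exists>c. in_pideal \<phi> (f - const3 c))"
    using main_part[OF assms(1-3) assms(5)] by blast
  have A: "casimir_rep \<phi> f \<longleftrightarrow> (\<exists>c. in_pideal \<phi> (f - const3 c))" for f
  proof
    assume cas: "casimir_rep \<phi> f"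
    have "in_pideal \<phi> (pbracket \<phi> f x3)" "in_pideal \<phi> (pbracket \<phi> f y3)" "in_pideal \<phi> (pbracket \<phi> f z3)"
      using cas unfolding casimir_rep_def by blast+
    moreover have "pbracket \<phi> f x3 = - (dy f * dz \<phi> - dz f * dy \<phi>)"
      by (simp add: pbracket_def d_x3 algebra_simps)
    moreover have "pbracket \<phi> f y3 = - (dz f * dx \<phi> - dx f * dz \<phi>)"
      by (simp add: pbracket_def d_y3 algebra_simps)
    moreover have "pbracket \<phi> f z3 = - (dx f * dy \<phi> - dy f * dx \<phi>)"
      by (simp add: pbracket_def d_z3 algebra_simps)
    ultimately show "\<exists>c. in_pideal \<phi> (f - const3 c)"
      using B neg_pideal by metis
  next
    assume "\<exists>c. in_pideal \<phi> (f - const3 c)"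
    then obtain c h where fh: "f - const3 c = \<phi> * h" unfolding in_pideal_def by blast
    then have fe: "f = const3 c + \<phi> * h" by (simp add: algebra_simps)
    have ex: "dx f = dx \<phi> * h + \<phi> * dx h" by (simp add: fe dx_add dx_mult d_const3)
    have ey: "dy f = dy \<phi> * h + \<phi> * dy h" by (simp add: fe dy_add dy_mult d_const3)
    have ez: "dz f = dz \<phi> * h + \<phi> * dz h" by (simp add: fe dz_add dz_mult d_const3)
    show "casimir_rep \<phi> f" unfolding casimir_rep_def
    proof
      fix g
      have "pbracket \<phi> f g = \<phi> * (dx h * (dy g * dz \<phi> - dz g * dy \<phi>)
            + dy h * (dz g * dx \<phi> - dx g * dz \<phi>) + dz h * (dx g * dy \<phi> - dy g * dx \<phi>))"
        unfolding pbracket_def ex ey ez by (simp add: algebra_simps)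
      then show "in_pideal \<phi> (pbracket \<phi> f g)" unfolding in_pideal_def by blast
    qed
  qed
  show ?thesis using A B by blast
qed

end
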